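(* Let $k(\bm{x},\bm{x}')=\kappa(\|\bm{x}-\bm{x}'\|)$ be a symmetric positive semidefinite isotropic kernel on $\mathbb{R}^d$ with $\kappa:[0,\infty)\to\mathbb{R}$ non-increasing. Let $\sigma_n^2>0$, let $\mathbb{D}_N^x=\{\bm{x}^{(i)}\}_{i=1}^N$ be an input training data set with GP posterior variance $\sigma_N^2(\cdot)$, and for $\rho>0$ let $\mathbb{B}_\rho(\bm{x})=\{\bm{x}'\in\mathbb{D}_N^x:\|\bm{x}'-\bm{x}\|\le\rho\}$. Then for every $\bm{x}$ and every $\rho>0$ with $|\mathbb{B}_\rho(\bm{x})|\ge1$ and $\kappa(\rho)\ge0$, $$\sigma_N^2(\bm{x})\le\kappa(0)-\frac{\kappa(\rho)^2}{\kappa(0)+\frac{\sigma_n^2}{|\mathbb{B}_\rho(\bm{x})|}}.$$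
   Context: Gaussian process posterior variance: given a kernel $k$, noise variance $\sigma_n^2>0$ and training inputs $\bm{x}^{(1)},\dots,\bm{x}^{(N)}$, define $K_{N,ij}=k(\bm{x}^{(i)},\bm{x}^{(j)})$, $k_{N,i}(\bm{x})=k(\bm{x},\bm{x}^{(i)})$, $\bm{A}_N=\bm{K}_N+\sigma_n^2\bm{I}_N$, and $\sigma_N^2(\bm{x})=k(\bm{x},\bm{x})-\bm{k}_N(\bm{x})^T\bm{A}_N^{-1}\bm{k}_N(\bm{x})$. $|\cdot|$ denotes cardinality (training points counted with multiplicity). *)

theory Defs
  imports "HOL-Analysis.Analysis"
begin

definition psd_kernel :: "('a \<Rightarrow> 'a \<Rightarrow> real) \<Rightarrow> bool" where
  "psd_kernel k \<longleftrightarrow>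
     (\<forall>(n::nat) (xs :: nat \<Rightarrow> 'a) (c :: nat \<Rightarrow> real).
        0 \<le> (\<Sum>i<n. \<Sum>j<n. c i * c j * k (xs i) (xs j)))"

definition symmetric_kernel :: "('a \<Rightarrow> 'a \<Rightarrow> real) \<Rightarrow> bool" where
  "symmetric_kernel k \<longleftrightarrow> (\<forall>x y. k x y = k y x)"

text \<open>Training inputs indexed by a finite type 'n (N = CARD('n)).\<close>
definition gram :: "('a \<Rightarrow> 'a \<Rightarrow> real) \<Rightarrow> ('n::finite \<Rightarrow> 'a) \<Rightarrow> real^'n^'n" where
  "gram k X = (\<chi> i j. k (X i) (X j))"

definition kvec :: "('a \<Rightarrow> 'a \<Rightarrow> real) \<Rightarrow> ('n::finite \<Rightarrow> 'a) \<Rightarrow> 'a \<Rightarrow> real^'n" where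
  "kvec k X x = (\<chi> i. k x (X i))"

definition post_var :: "('a \<Rightarrow> 'a \<Rightarrow> real) \<Rightarrow> real \<Rightarrow> ('n::finite \<Rightarrow> 'a) \<Rightarrow> 'a \<Rightarrow> real" where
  "post_var k sn2 X x =
     k x x - kvec k X x \<bullet> (matrix_inv (gram k X + sn2 *\<^sub>R mat 1) *v kvec k X x)"

end

theory Submission
  imports Defs
begin

lemma psd_fin:
  fixes k :: "'a \<Rightarrow> 'a \<Rightarrow> real" and X :: "'n::finite \<Rightarrow> 'a" and v :: "real^'n"
  assumes psd: "psd_kernel k"
  shows "0 \<le> (\<Sum>i\<in>UNIV. \<Sum>j\<in>UNIV. v$i * v$j * k (X i) (X j))"
proof -
  obtain h :: "nat \<Rightarrow> 'n" where h: "bij_betw h {0..<card (UNIV::'n set)} UNIV"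
    using ex_bij_betw_nat_finite[of "UNIV::'n set"] by auto
  have e: "\<And>F::'n\<Rightarrow>real. sum F UNIV = (\<Sum>i\<in>{0..<card(UNIV::'n set)}. F (h i))"
    by (simp add: sum.reindex_bij_betw[OF h])
  have p: "0 \<le> (\<Sum>i<card (UNIV::'n set). \<Sum>j<card (UNIV::'n set).
       (\<lambda>i. v$(h i)) i * (\<lambda>i. v$(h i)) j * k ((\<lambda>i. X (h i)) i) ((\<lambda>i. X (h i)) j))"
    using psd[unfolded psd_kernel_def, rule_format, where n="card (UNIV::'n set)" and xs="\<lambda>i. X (h i)" and c="\<lambda>i. v$(h i)"] .
  show ?thesis unfolding e using p by (simp add: atLeast0LessThan)
qed

lemma inv_right:
  fixes A :: "real^'n^'n"
  assumes "invertible A"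
  shows "A ** matrix_inv A = mat 1"
proof -
  from assms obtain A' where "A ** A' = mat 1 \<and> A' ** A = mat 1" by (auto simp: invertible_def)
  then have "A ** matrix_inv A = mat 1 \<and> matrix_inv A ** A = mat 1"
    unfolding matrix_inv_def by (rule someI)
  then show ?thesis by simp
qed

theorem corollary3p1:
  fixes \<kappa> :: "real \<Rightarrow> real"
    and k :: "'a::euclidean_space \<Rightarrow> 'a \<Rightarrow> real"
    and sn2 :: real
    and X :: "'n::finite \<Rightarrow> 'a"
    and x :: 'a
    and \<rho> :: real
  assumes k_def: "\<And>y z. k y z = \<kappa> (norm (y - z))"
    and sym: "symmetric_kernel k"
    and psd: "psd_kernel k"
    and mono: "antimono_on {0..} \<kappa>"
    and sn2_pos: "sn2 > 0"
    and rho_pos: "\<rho> > 0"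
    and ball_ne: "card {i. norm (X i - x) \<le> \<rho>} \<ge> 1"
    and kappa_rho: "\<kappa> \<rho> \<ge> 0"
  shows "post_var k sn2 X x
           \<le> \<kappa> 0 - (\<kappa> \<rho>)\<^sup>2 / (\<kappa> 0 + sn2 / real (card {i. norm (X i - x) \<le> \<rho>}))"
proof -
  define B where "B = {i. norm (X i - x) \<le> \<rho>}"
  define m where "m = real (card B)"
  have m1: "m \<ge> 1" using ball_ne unfolding m_def B_def by simp
  define A where "A = gram k X + sn2 *\<^sub>R mat 1"
  have Aij: "\<And>i j. A $ i $ j = k (X i) (X j) + (if i = j then sn2 else 0)"
    by (simp add: A_def gram_def mat_def)
  have quad: "\<And>v. v \<bullet> (A *v v) = (\<Sum>i\<in>UNIV. \<Sum>j\<in>UNIV. v$i * v$j * k (X i) (X j)) + sn2 * (v \<bullet> v)"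
  proof -
    fix v :: "real^'n"
    have "v \<bullet> (A *v v) = (\<Sum>i\<in>UNIV. \<Sum>j\<in>UNIV. v$i * (k (X i) (X j) + (if i = j then sn2 else 0)) * v$j)"
      by (simp add: inner_vec_def matrix_vector_mult_def Aij sum_distrib_left mult.assoc)
    also have "\<dots> = (\<Sum>i\<in>UNIV. \<Sum>j\<in>UNIV. v$i * v$j * k (X i) (X j)) + (\<Sum>i\<in>UNIV. \<Sum>j\<in>UNIV. v$i * (if i = j then sn2 else 0) * v$j)"
      by (simp add: algebra_simps sum.distrib)
    also have "(\<Sum>i\<in>UNIV. \<Sum>j\<in>UNIV. v$i * (if i = j then sn2 else 0) * v$j) = sn2 * (v \<bullet> v)"
    proof -
      have "\<And>i. (\<Sum>j\<in>UNIV. v$i * (if i = j then sn2 else 0) * v$j) = (\<Sum>j\<in>UNIV. if i = j then sn2 * (v$i * v$i) else 0)"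
        by (rule sum.cong) auto
      then show ?thesis by (simp add: inner_vec_def sum_distrib_left)
    qed
    finally show "v \<bullet> (A *v v) = (\<Sum>i\<in>UNIV. \<Sum>j\<in>UNIV. v$i * v$j * k (X i) (X j)) + sn2 * (v \<bullet> v)" .
  qed
  have qpos: "\<And>v. sn2 * (v \<bullet> v) \<le> v \<bullet> (A *v v)"
  proof -
    fix v :: "real^'n"
    show "sn2 * (v \<bullet> v) \<le> v \<bullet> (A *v v)"
      using quad[of v] psd_fin[OF psd, of v X] by linarith
  qed
  have ker: "\<And>v. A *v v = 0 \<Longrightarrow> v = 0"
  proof -
    fix v :: "real^'n" assume "A *v v = 0"
    then have "sn2 * (v \<bullet> v) \<le> 0" using qpos[of v] by simp
    then have "v \<bullet> v \<le> 0" using sn2_pos by (simp add: mult_le_0_iff)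
    then show "v = 0" by (metis inner_eq_zero_iff inner_ge_zero order_antisym)
  qed
  have invA: "invertible A"
    using ker by (simp add: invertible_left_inverse matrix_left_invertible_ker)
  define kv where "kv = kvec k X x"
  define u where "u = matrix_inv A *v kv"
  have Au: "A *v u = kv"
    by (simp add: u_def matrix_vector_mul_assoc inv_right[OF invA])
  have symA: "\<And>i j. A $ i $ j = A $ j $ i" using sym Aij unfolding symmetric_kernel_def by metis
  have swap: "\<And>a b. a \<bullet> (A *v b) = b \<bullet> (A *v a)"
  proof -
    fix a b :: "real^'n"
    have "a \<bullet> (A *v b) = (\<Sum>i\<in>UNIV. \<Sum>j\<in>UNIV. a$i * A$i$j * b$j)"
      by (simp add: inner_vec_def matrix_vector_mult_def sum_distrib_left mult.assoc)
    also have "\<dots> = (\<Sum>j\<in>UNIV. \<Sum>i\<in>UNIV. a$i * A$i$j * b$j)" by (rule sum.swap)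
    also have "\<dots> = b \<bullet> (A *v a)"
      by (simp add: inner_vec_def matrix_vector_mult_def sum_distrib_left symA algebra_simps)
    finally show "a \<bullet> (A *v b) = b \<bullet> (A *v a)" .
  qed
  have key: "\<And>c. 2 * (c \<bullet> kv) - c \<bullet> (A *v c) \<le> kv \<bullet> u"
  proof -
    fix c :: "real^'n"
    have "0 \<le> (c - u) \<bullet> (A *v (c - u))" using qpos[of "c - u"] sn2_pos
      by (smt (verit) inner_ge_zero mult_nonneg_nonneg)
    also have "\<dots> = c \<bullet> (A *v c) - c \<bullet> (A *v u) - u \<bullet> (A *v c) + u \<bullet> (A *v u)"
      by (simp add: matrix_vector_mult_diff_distrib inner_diff_left inner_diff_right)
    also have "\<dots> = c \<bullet> (A *v c) - 2 * (c \<bullet> kv) + kv \<bullet> u"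
      using swap[of u c] Au by (simp add: inner_commute)
    finally show "2 * (c \<bullet> kv) - c \<bullet> (A *v c) \<le> kv \<bullet> u" by simp
  qed
  have kmono: "\<And>a b. 0 \<le> a \<Longrightarrow> a \<le> b \<Longrightarrow> \<kappa> b \<le> \<kappa> a"
    using mono unfolding monotone_on_def by auto
  have k00: "0 \<le> \<kappa> 0"
  proof -
    have "\<forall>xs c. 0 \<le> (\<Sum>i<Suc 0. \<Sum>j<Suc 0. c i * c j * k (xs i) (xs j))"
      using psd unfolding psd_kernel_def by blast
    then have "0 \<le> k x x"
      by (drule_tac x="\<lambda>_. x" in spec, drule_tac x="\<lambda>_. 1" in spec) simp
    then show ?thesis by (simp add: k_def)
  qed
  have m0: "m > 0" using m1 by simp
  define D where "D = m^2 * \<kappa> 0 + m * sn2"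
  have D0: "D > 0" unfolding D_def using m0 k00 sn2_pos
    by (simp add: add_nonneg_pos)
  define \<alpha> where "\<alpha> = m * \<kappa> \<rho> / D"
  have a0: "\<alpha> \<ge> 0" unfolding \<alpha>_def using m0 D0 kappa_rho by simp
  define c :: "real^'n" where "c = (\<chi> i. if i \<in> B then \<alpha> else 0)"
  have sumc: "\<And>f. (\<Sum>i\<in>UNIV. c$i * f i) = \<alpha> * (\<Sum>i\<in>B. f i)"
    by (simp add: c_def if_distrib if_distribR sum.If_cases sum_distrib_left)
  have c0: "\<And>i. c$i \<ge> 0" using a0 by (simp add: c_def)
  have cB: "\<And>i. c$i \<le> \<alpha>" using a0 by (simp add: c_def)
  have ckv: "c \<bullet> kv \<ge> \<alpha> * (m * \<kappa> \<rho>)"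
  proof -
    have "c \<bullet> kv = \<alpha> * (\<Sum>i\<in>B. \<kappa> (norm (x - X i)))"
      using sumc[of "\<lambda>i. \<kappa> (norm (x - X i))"]
      by (simp add: inner_vec_def kv_def kvec_def k_def)
    moreover have "(\<Sum>i\<in>B. \<kappa> \<rho>) \<le> (\<Sum>i\<in>B. \<kappa> (norm (x - X i)))"
      by (rule sum_mono, rule kmono) (auto simp: B_def norm_minus_commute)
    moreover have "(\<Sum>i\<in>B. \<kappa> \<rho>) = m * \<kappa> \<rho>" by (simp add: m_def)
    ultimately have "m * \<kappa> \<rho> \<le> (\<Sum>i\<in>B. \<kappa> (norm (x - X i)))" and
      "c \<bullet> kv = \<alpha> * (\<Sum>i\<in>B. \<kappa> (norm (x - X i)))" by (simp_all add: m_def)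
    then show ?thesis using mult_left_mono[OF _ a0] by simp
  qed
  have cc: "c \<bullet> c = \<alpha>^2 * m"
  proof -
    have "(\<Sum>i\<in>B. c$i) = (\<Sum>i\<in>B. \<alpha>)"
      by (rule sum.cong) (simp_all add: c_def)
    also have "(\<Sum>i\<in>B. \<alpha>) = \<alpha> * m"
      unfolding sum_constant m_def by (rule mult.commute)
    finally have cBa: "(\<Sum>i\<in>B. c$i) = \<alpha> * m" .
    have "c \<bullet> c = (\<Sum>i\<in>UNIV. c$i * c$i)" by (simp add: inner_vec_def)
    also have "\<dots> = \<alpha> * (\<Sum>i\<in>B. c$i)" by (rule sumc)
    finally show ?thesis using cBa by (simp add: power2_eq_square)
  qed
  have sc: "(\<Sum>i\<in>UNIV. c$i) = \<alpha> * m"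
  proof -
    have "(\<Sum>i\<in>UNIV. c$i) = (\<Sum>i\<in>UNIV. c$i * 1)" by simp
    also have "\<dots> = \<alpha> * (\<Sum>i\<in>B. 1)" by (rule sumc)
    also have "\<alpha> * (\<Sum>i\<in>B. 1) = \<alpha> * m"
      unfolding sum_constant m_def by simp
    finally show ?thesis .
  qed
  have kle: "\<And>i j. k (X i) (X j) \<le> \<kappa> 0"
    unfolding k_def by (rule kmono) auto
  have KK: "(\<Sum>i\<in>UNIV. \<Sum>j\<in>UNIV. c$i * c$j * k (X i) (X j)) \<le> \<alpha>^2 * m^2 * \<kappa> 0"
  proof -
    have "(\<Sum>i\<in>UNIV. \<Sum>j\<in>UNIV. c$i * c$j * k (X i) (X j)) \<le> (\<Sum>i\<in>UNIV. \<Sum>j\<in>UNIV. c$i * c$j * \<kappa> 0)"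
      by (intro sum_mono mult_left_mono kle mult_nonneg_nonneg c0)
    also have "\<dots> = (\<Sum>i\<in>UNIV. c$i) * (\<Sum>j\<in>UNIV. c$j) * \<kappa> 0"
      by (simp add: sum_distrib_left sum_distrib_right mult.assoc mult.left_commute)
    also have "\<dots> = \<alpha>^2 * m^2 * \<kappa> 0" by (simp add: sc power2_eq_square)
    finally show ?thesis .
  qed
  have cAc: "c \<bullet> (A *v c) \<le> \<alpha>^2 * D"
    using quad[of c] KK cc unfolding D_def by (simp add: algebra_simps)
  have low: "m^2 * (\<kappa> \<rho>)^2 / D \<le> kv \<bullet> u"
  proof -
    have "2 * (\<alpha> * (m * \<kappa> \<rho>)) - \<alpha>^2 * D \<le> kv \<bullet> u"
      using key[of c] ckv cAc by linarith
    moreover have "2 * (\<alpha> * (m * \<kappa> \<rho>)) - \<alpha>^2 * D = m^2 * (\<kappa> \<rho>)^2 / D"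
      unfolding \<alpha>_def using D0 by (simp add: field_simps power2_eq_square)
    ultimately show ?thesis by simp
  qed
  have eq: "(\<kappa> \<rho>)\<^sup>2 / (\<kappa> 0 + sn2 / real (card {i. norm (X i - x) \<le> \<rho>})) = m^2 * (\<kappa> \<rho>)^2 / D"
  proof -
    have "\<kappa> 0 + sn2 / m = D / m^2" unfolding D_def using m0
      by (simp add: field_simps power2_eq_square)
    then show ?thesis unfolding m_def[symmetric] B_def[symmetric]
      by simp
  qed
  have pv: "post_var k sn2 X x = \<kappa> 0 - kv \<bullet> u"
    by (simp add: post_var_def A_def kv_def u_def k_def)
  show ?thesis using pv eq low by linarith
qed
end
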